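(* Let $H\in\mathbb{R}^{N\times n}$ with $H^TH$ positive definite, written as $H^TH=P\,\mathrm{diag}\{\lambda_1,\dots,\lambda_n\}P^{-1}$ with $P$ orthogonal and $\lambda_1\ge\lambda_2\ge\dots\ge\lambda_n>0$. Let $c\ge0$ be an integer and, for $\bar\mu\ge\lambda_2$, let $R=P\,\mathrm{diag}\{\lambda_{R,1},\dots,\lambda_{R,n}\}P^{-1}$ with $\lambda_{R,i}=\max\{\bar\mu-\lambda_i,0\}$ (so $R$ and $F(R)$ are symmetric positive semidefinite). Define $F(R)=R(H^TH+R)^{-1}$, $F_{ar}(R)=(H^TH)^{-1}F(R)^{c+1}$, $\mathrm{Cond}(R)=\|H^TH+R\|\,\|(H^TH+R)^{-1}\|$ and $\mathrm{Obj}(R)=\|F_{ar}(R)\|\cdot\mathrm{Cond}(R)$. Then: $\mathrm{Obj}(R)$ is a bounded function of $\bar\mu$ and has a global minimum; for $\bar\mu\ge\lambda_1$, $\mathrm{Cond}(R)$ attains its minimal possible value $1$ (maximal generalizability); and if $\lambda_1\ge\bar\mu\ge\lambda_2$, the largest eigenvalue of $H^TH+R$ equals $\lambda_1$, the largest eigenvalue of $H^TH$.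
   Context: $\|\cdot\|$ is the spectral norm. The paper measures the generalizability of the network by the condition number $\mathrm{Cond}(R)$ of $H^TH+R$: a smaller condition number means better generalizability, and "maximal generalizability" means $\mathrm{Cond}(R)$ is minimized. *)

theory Defs
  imports "HOL-Analysis.Analysis"
begin

definition snorm :: "real^'n^'m \<Rightarrow> real" where
  "snorm M = onorm (\<lambda>x. M *v x)"

definition diagm :: "('n::finite \<Rightarrow> real) \<Rightarrow> real^'n^'n" where
  "diagm d = (\<chi> i j. if i = j then d i else 0)"

definition mpow :: "real^'n^'n \<Rightarrow> nat \<Rightarrow> real^'n^'n" where
  "mpow M k = (((**) M) ^^ k) (mat 1)"

definition is_eigenvalue :: "real^'n^'n \<Rightarrow> real \<Rightarrow> bool" where
  "is_eigenvalue M l \<longleftrightarrow> (\<exists>v. v \<noteq> 0 \<and> M *v v = l *s v)"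

definition Rmat :: "real^'n^'n \<Rightarrow> ('n::finite \<Rightarrow> real) \<Rightarrow> real \<Rightarrow> real^'n^'n" where
  "Rmat P lam mu = P ** diagm (\<lambda>i. max (mu - lam i) 0) ** matrix_inv P"

definition Fmat :: "real^'n^'n \<Rightarrow> real^'n^'n \<Rightarrow> real^'n^'n" where
  "Fmat A R = R ** matrix_inv (A + R)"

definition Far :: "nat \<Rightarrow> real^'n^'n \<Rightarrow> real^'n^'n \<Rightarrow> real^'n^'n" where
  "Far c A R = matrix_inv A ** mpow (Fmat A R) (c + 1)"

definition Cond :: "real^'n^'n \<Rightarrow> real^'n^'n \<Rightarrow> real" where
  "Cond A R = snorm (A + R) * snorm (matrix_inv (A + R))"

definition Obj :: "nat \<Rightarrow> real^'n^'n \<Rightarrow> real^'n^'n \<Rightarrow> real" where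
  "Obj c A R = snorm (Far c A R) * Cond A R"

end

theory Submission
  imports Defs
begin
definition Sm :: "real^'n^'n \<Rightarrow> ('n::finite \<Rightarrow> real) \<Rightarrow> real^'n^'n" where
  "Sm P d = P ** diagm d ** transpose P"

lemma diagm_mult: "diagm a ** diagm b = diagm (\<lambda>i. a i * b i)"
  unfolding diagm_def matrix_matrix_mult_def
  by (simp add: vec_eq_iff if_distrib[where f="\<lambda>x. x * _"] cong: if_cong)

lemma diagm_add: "diagm a + diagm b = diagm (\<lambda>i. a i + b i)"
  unfolding diagm_def by (simp add: vec_eq_iff)

lemma diagm_one: "diagm (\<lambda>i. 1) = mat 1"
  unfolding diagm_def mat_def by (simp add: vec_eq_iff)

lemma diagm_vec: "diagm d *v x = (\<chi> i. d i * x $ i)"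
  unfolding diagm_def matrix_vector_mult_def
  by (simp add: vec_eq_iff if_distrib[where f="\<lambda>x. x * _"] cong: if_cong)

lemma orthD: "orthogonal_matrix (P::real^'n^'n) \<Longrightarrow> transpose P ** P = mat 1 \<and> P ** transpose P = mat 1"
  by (simp add: orthogonal_matrix_def)

lemma Sm_mult: fixes P :: "real^'n^'n" assumes "orthogonal_matrix P"
  shows "Sm P a ** Sm P b = Sm P (\<lambda>i. a i * b i)"
proof -
  have "Sm P a ** Sm P b = P ** diagm a ** (transpose P ** P) ** diagm b ** transpose P"
    unfolding Sm_def by (simp add: matrix_mul_assoc)
  also have "\<dots> = Sm P (\<lambda>i. a i * b i)"
    using orthD[OF assms] by (simp add: Sm_def diagm_mult[symmetric] matrix_mul_assoc)
  finally show ?thesis .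
qed

lemma matrix_add_rdistrib': "((A::real^'n^'m) + B) ** C = A ** C + B ** C"
  by (simp add: vec_eq_iff matrix_matrix_mult_def sum.distrib distrib_right)

lemma Sm_add: "Sm P a + Sm P b = Sm P (\<lambda>i. a i + b i)"
  unfolding Sm_def by (simp add: matrix_add_ldistrib matrix_add_rdistrib' diagm_add[symmetric])

lemma matrix_inv_unique:
  fixes A :: "real^'n^'n"
  assumes "A ** B = mat 1" "B ** A = mat 1"
  shows "matrix_inv A = B"
proof -
  have ex: "\<exists>A'. A ** A' = mat 1 \<and> A' ** A = mat 1" using assms by blast
  define C where "C = matrix_inv A"
  have C: "A ** C = mat 1 \<and> C ** A = mat 1"
    unfolding C_def matrix_inv_def by (rule someI_ex[OF ex])
  have "C = C ** (A ** B)" using assms by simp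
  also have "\<dots> = (C ** A) ** B" by (simp add: matrix_mul_assoc)
  also have "\<dots> = B" using C by simp
  finally show ?thesis unfolding C_def .
qed

lemma matrix_inv_right:
  fixes A :: "real^'n^'n"
  assumes "invertible A"
  shows "A ** matrix_inv A = mat 1"
proof -
  have ex: "\<exists>A'. A ** A' = mat 1 \<and> A' ** A = mat 1" using assms unfolding invertible_def by blast
  show ?thesis unfolding matrix_inv_def using someI_ex[OF ex] by blast
qed

lemma orth_inv: "orthogonal_matrix (P::real^'n^'n) \<Longrightarrow> matrix_inv P = transpose P"
  by (rule matrix_inv_unique) (simp_all add: orthD)

lemma Sm_one: "orthogonal_matrix (P::real^'n^'n) \<Longrightarrow> Sm P (\<lambda>i. 1) = mat 1"
  by (simp add: Sm_def diagm_one orthD)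

lemma Sm_inv: fixes P :: "real^'n^'n" assumes "orthogonal_matrix P" "\<And>i. d i \<noteq> 0"
  shows "matrix_inv (Sm P d) = Sm P (\<lambda>i. 1 / d i)"
  by (rule matrix_inv_unique) (simp_all add: Sm_mult assms Sm_one)

lemma mpow_Sm: fixes P :: "real^'n^'n" assumes "orthogonal_matrix P"
  shows "mpow (Sm P d) k = Sm P (\<lambda>i. d i ^ k)"
proof (induction k)
  case 0 then show ?case by (simp add: mpow_def Sm_one assms)
next
  case (Suc k)
  have "mpow (Sm P d) (Suc k) = Sm P d ** mpow (Sm P d) k" by (simp add: mpow_def)
  then show ?case using Suc by (simp add: Sm_mult assms)
qed

lemma orth_norm: fixes P :: "real^'n^'n" assumes "orthogonal_matrix P" shows "norm (P *v x) = norm x"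
proof -
  have "orthogonal_transformation (\<lambda>x. P *v x)"
    using assms by (simp add: orthogonal_transformation_matrix)
  then show ?thesis by (rule orthogonal_transformation_norm)
qed

lemma Sm_vec: fixes P :: "real^'n^'n" assumes "orthogonal_matrix P"
  shows "Sm P d *v (P *v y) = P *v (diagm d *v y)"
proof -
  have "Sm P d *v (P *v y) = P *v (diagm d *v ((transpose P ** P) *v y))"
    unfolding Sm_def by (simp only: matrix_vector_mul_assoc matrix_mul_assoc)
  then show ?thesis using orthD[OF assms] by simp
qed

lemma diag_norm_le:
  fixes d :: "'n::finite \<Rightarrow> real"
  assumes "\<And>i. \<bar>d i\<bar> \<le> M"
  shows "norm (diagm d *v x) \<le> M * norm x"
proof -
  have M0: "0 \<le> M" using assms[of undefined] by linarith
  have "(norm (diagm d *v x))^2 = (diagm d *v x) \<bullet> (diagm d *v x)"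
    by (rule power2_norm_eq_inner)
  also have "\<dots> = (\<Sum>i\<in>UNIV. (d i * x$i)^2)"
    by (simp add: inner_vec_def diagm_vec power2_eq_square)
  also have "\<dots> \<le> (\<Sum>i\<in>UNIV. M^2 * (x$i)^2)"
  proof (rule sum_mono)
    fix i
    have "\<bar>d i\<bar>^2 \<le> M^2" using assms[of i] by (intro power_mono) simp_all
    then show "(d i * x$i)^2 \<le> M^2 * (x$i)^2"
      by (simp add: power_mult_distrib mult_right_mono)
  qed
  also have "\<dots> = M^2 * (x \<bullet> x)"
    by (simp add: sum_distrib_left inner_vec_def power2_eq_square)
  also have "\<dots> = (M * norm x)^2"
    by (simp add: power_mult_distrib power2_norm_eq_inner)
  finally show ?thesis using M0 by (simp add: power2_le_iff_abs_le)
qed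

lemma snorm_Sm:
  fixes d :: "'n::finite \<Rightarrow> real" and P :: "real^'n^'n"
  assumes "orthogonal_matrix P"
  shows "snorm (Sm P d) = Max (range (\<lambda>i. \<bar>d i\<bar>))"
proof (rule antisym)
  let ?M = "Max (range (\<lambda>i. \<bar>d i\<bar>))"
  show "snorm (Sm P d) \<le> ?M"
    unfolding snorm_def
  proof (rule onorm_le)
    fix x
    have "P *v (transpose P *v x) = (P ** transpose P) *v x" by (simp only: matrix_vector_mul_assoc)
    then have "x = P *v (transpose P *v x)" using orthD[OF assms] by simp
    then have "norm (Sm P d *v x) = norm (P *v (diagm d *v (transpose P *v x)))"
      using Sm_vec[OF assms] by metis
    also have "\<dots> = norm (diagm d *v (transpose P *v x))" by (simp add: orth_norm assms)
    also have "\<dots> \<le> ?M * norm (transpose P *v x)"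
      by (rule diag_norm_le) simp
    also have "norm (transpose P *v x) = norm x" by (rule orth_norm) (simp add: assms)
    finally show "norm (Sm P d *v x) \<le> ?M * norm x" .
  qed
next
  let ?M = "Max (range (\<lambda>i. \<bar>d i\<bar>))"
  obtain k where k: "?M = \<bar>d k\<bar>"
  proof -
    have "?M \<in> range (\<lambda>i. \<bar>d i\<bar>)" by (rule Max_in) auto
    then show ?thesis using that by blast
  qed
  have "Sm P d *v (P *v axis k 1) = P *v (d k *s axis k 1)"
  proof -
    have "diagm d *v axis k 1 = d k *s axis k 1"
      unfolding diagm_vec by (simp add: vec_eq_iff axis_def)
    then show ?thesis unfolding Sm_vec[OF assms] by simp
  qed
  then have "norm (Sm P d *v (P *v axis k 1)) = \<bar>d k\<bar>"
    by (simp add: orth_norm assms scalar_mult_eq_scaleR)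
  moreover have "norm (Sm P d *v (P *v axis k 1)) / norm (P *v axis k 1) \<le> snorm (Sm P d)"
    unfolding snorm_def by (rule le_onorm) simp
  ultimately show "?M \<le> snorm (Sm P d)" using k by (simp add: orth_norm assms)
qed

lemma cont_Max:
  fixes f :: "'i \<Rightarrow> real \<Rightarrow> real"
  assumes "finite I" "I \<noteq> {}" "\<And>i. i \<in> I \<Longrightarrow> continuous_on K (f i)"
  shows "continuous_on K (\<lambda>x. Max ((\<lambda>i. f i x) ` I))"
  using assms
proof (induction I rule: finite_ne_induct)
  case (singleton x) then show ?case by simp
next
  case (insert a I)
  have "continuous_on K (\<lambda>x. max (f a x) (Max ((\<lambda>i. f i x) ` I)))"
    using insert by (intro continuous_on_max) auto
  then show ?case using insert by simp
qed

lemma Max_range_mono: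
  fixes f g :: "'i::finite \<Rightarrow> real"
  assumes "\<And>i. f i \<le> g i"
  shows "Max (range f) \<le> Max (range g)"
proof -
  have "Max (range f) \<in> range f" by (rule Max_in) auto
  then obtain k where k: "Max (range f) = f k" by (metis imageE)
  have "g k \<le> Max (range g)" by (rule Max_ge) auto
  then show ?thesis using k assms[of k] by linarith
qed

lemma Max_range_ge:
  fixes f :: "'i::finite \<Rightarrow> real"
  shows "f k \<le> Max (range f)"
  by (rule Max_ge) auto

lemma Max_range_const: "Max (range (\<lambda>i::'i. c::real)) = c"
  by simp

theorem proposition2:
  fixes H :: "real^'n^'m"
    and P :: "real^'n^'n"
    and lam :: "'n \<Rightarrow> real"
    and e :: "nat \<Rightarrow> 'n"
    and c :: nat
  assumes card2: "CARD('n) \<ge> 2"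
    and enum: "bij_betw e {..<CARD('n)} UNIV"
    and sorted: "\<And>i j. i \<le> j \<Longrightarrow> j < CARD('n) \<Longrightarrow> lam (e j) \<le> lam (e i)"
    and pos: "lam (e (CARD('n) - 1)) > 0"
    and orth: "orthogonal_matrix P"
    and decomp: "transpose H ** H = P ** diagm lam ** matrix_inv P"
  shows "(\<exists>B. \<forall>mu \<ge> lam (e 1).
            \<bar>Obj c (transpose H ** H) (Rmat P lam mu)\<bar> \<le> B)
       \<and> (\<exists>mu0 \<ge> lam (e 1). \<forall>mu \<ge> lam (e 1).
            Obj c (transpose H ** H) (Rmat P lam mu0) \<le> Obj c (transpose H ** H) (Rmat P lam mu))
       \<and> (\<forall>mu \<ge> lam (e 0). Cond (transpose H ** H) (Rmat P lam mu) = 1)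
       \<and> (\<forall>R'. invertible (transpose H ** H + R') \<longrightarrow> 1 \<le> Cond (transpose H ** H) R')
       \<and> (\<forall>mu. lam (e 1) \<le> mu \<and> mu \<le> lam (e 0) \<longrightarrow>
            is_eigenvalue (transpose H ** H + Rmat P lam mu) (lam (e 0))
          \<and> (\<forall>l. is_eigenvalue (transpose H ** H + Rmat P lam mu) l \<longrightarrow> l \<le> lam (e 0)))"
proof -
  define A where "A = transpose H ** H"
  define l0 where "l0 = lam (e 0)"
  define l1 where "l1 = lam (e 1)"
  have A: "A = Sm P lam" unfolding A_def decomp Sm_def orth_inv[OF orth] ..
  have surj: "e ` {..<CARD('n)} = UNIV" using enum by (simp add: bij_betw_def)
  have lam_le0: "lam i \<le> l0" for i
  proof -
    obtain j where "j < CARD('n)" "i = e j" using surj by (metis UNIV_I imageE lessThan_iff)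
    then show ?thesis unfolding l0_def using sorted[of 0 j] by simp
  qed
  have lam_pos: "0 < lam i" for i
  proof -
    obtain j where "j < CARD('n)" "i = e j" using surj by (metis UNIV_I imageE lessThan_iff)
    moreover have "CARD('n) - 1 < CARD('n)" using card2 by simp
    ultimately show ?thesis using sorted[of j "CARD('n) - 1"] pos by force
  qed
  have l10: "l1 \<le> l0" unfolding l0_def l1_def using sorted[of 0 1] card2 by simp
  have l1pos: "0 < l1" unfolding l1_def by (rule lam_pos)
  have l0pos: "0 < l0" unfolding l0_def by (rule lam_pos)
  define r where "r mu i = max (mu - lam i) 0" for mu i
  define m where "m mu i = max mu (lam i)" for mu i
  have mpos: "0 < m mu i" for mu i unfolding m_def using lam_pos[of i] by linarith
  have R: "Rmat P lam mu = Sm P (r mu)" for mu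
    unfolding Rmat_def Sm_def orth_inv[OF orth] r_def ..
  have AR: "A + Rmat P lam mu = Sm P (m mu)" for mu
  proof -
    have "(\<lambda>i. lam i + r mu i) = m mu" unfolding r_def m_def by (auto simp: fun_eq_iff)
    then show ?thesis unfolding A R Sm_add by simp
  qed
  define phi where "phi mu = Max (range (\<lambda>i. \<bar>1 / lam i * (r mu i * (1 / m mu i)) ^ (c+1)\<bar>))
     * (Max (range (\<lambda>i. \<bar>m mu i\<bar>)) * Max (range (\<lambda>i. \<bar>1 / m mu i\<bar>)))" for mu
  have Cond_eq: "Cond A (Rmat P lam mu) = Max (range (\<lambda>i. \<bar>m mu i\<bar>)) * Max (range (\<lambda>i. \<bar>1 / m mu i\<bar>))" for mu
    unfolding Cond_def AR Sm_inv[OF orth mpos[THEN less_imp_neq, THEN not_sym]] snorm_Sm[OF orth] ..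
  have Obj_eq: "Obj c A (Rmat P lam mu) = phi mu" for mu
  proof -
    have "Far c A (Rmat P lam mu) = Sm P (\<lambda>i. 1 / lam i * (r mu i * (1 / m mu i)) ^ (c+1))"
      unfolding Far_def Fmat_def AR
      unfolding A Sm_inv[OF orth mpos[THEN less_imp_neq, THEN not_sym]]
        Sm_inv[OF orth lam_pos[THEN less_imp_neq, THEN not_sym]] R Sm_mult[OF orth] mpow_Sm[OF orth] ..
    then show ?thesis unfolding Obj_def Cond_eq phi_def by (simp only: snorm_Sm[OF orth])
  qed
  have P3: "Cond A (Rmat P lam mu) = 1" if "l0 \<le> mu" for mu
  proof -
    have "lam i \<le> mu" for i using lam_le0[of i] that by linarith
    then have "m mu = (\<lambda>i. mu)" unfolding m_def by (auto simp: fun_eq_iff)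
    then show ?thesis unfolding Cond_eq using l0pos that by simp
  qed
  have P4: "1 \<le> Cond A R'" if inv: "invertible (A + R')" for R'
  proof -
    let ?M = "A + R'"
    have "onorm ((\<lambda>x. ?M *v x) \<circ> (\<lambda>x. matrix_inv ?M *v x)) \<le> snorm ?M * snorm (matrix_inv ?M)"
      unfolding snorm_def by (rule onorm_compose) simp_all
    moreover have "(\<lambda>x. ?M *v x) \<circ> (\<lambda>x. matrix_inv ?M *v x) = (\<lambda>x. x)"
      using matrix_inv_right[OF inv] by (auto simp: fun_eq_iff matrix_vector_mul_assoc)
    ultimately show ?thesis unfolding Cond_def by (simp add: onorm_id)
  qed
  have P5: "is_eigenvalue (A + Rmat P lam mu) l0 \<and> (\<forall>l. is_eigenvalue (A + Rmat P lam mu) l \<longrightarrow> l \<le> l0)"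
    if mu: "l1 \<le> mu" "mu \<le> l0" for mu
  proof
    have me0: "m mu (e 0) = l0" unfolding m_def l0_def using mu by (simp add: l0_def)
    let ?v = "P *v axis (e 0) (1::real)"
    have "?v \<noteq> 0"
    proof
      assume "?v = 0"
      then have "norm ?v = 0" by simp
      then show False by (simp add: orth_norm[OF orth])
    qed
    moreover have "Sm P (m mu) *v ?v = l0 *s ?v"
    proof -
      have "diagm (m mu) *v axis (e 0) 1 = l0 *s axis (e 0) 1"
        unfolding diagm_vec by (simp add: vec_eq_iff axis_def me0)
      then show ?thesis unfolding Sm_vec[OF orth] by (simp add: matrix_vector_mult_scaleR scalar_mult_eq_scaleR)
    qed
    ultimately show "is_eigenvalue (A + Rmat P lam mu) l0" unfolding is_eigenvalue_def AR by blast
  next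
    show "\<forall>l. is_eigenvalue (A + Rmat P lam mu) l \<longrightarrow> l \<le> l0"
    proof (intro allI impI)
      fix l assume "is_eigenvalue (A + Rmat P lam mu) l"
      then obtain v where v: "v \<noteq> 0" "Sm P (m mu) *v v = l *s v" unfolding is_eigenvalue_def AR by blast
      define w where "w = transpose P *v v"
      have vw: "v = P *v w"
      proof -
        have "P *v w = (P ** transpose P) *v v" unfolding w_def by (simp only: matrix_vector_mul_assoc)
        then show ?thesis using orthD[OF orth] by simp
      qed
      have "w \<noteq> 0" using v vw by auto
      then obtain j where j: "w $ j \<noteq> 0" by (auto simp: vec_eq_iff)
      have "P *v (diagm (m mu) *v w) = P *v (l *s w)"
        using v(2) unfolding vw Sm_vec[OF orth] by (simp add: matrix_vector_mult_scaleR scalar_mult_eq_scaleR)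
      then have "transpose P *v (P *v (diagm (m mu) *v w)) = transpose P *v (P *v (l *s w))" by simp
      then have "diagm (m mu) *v w = l *s w"
        unfolding matrix_vector_mul_assoc using orthD[OF orth] by (simp add: matrix_mul_assoc)
      then have "m mu j * w $ j = l * w $ j" unfolding diagm_vec by (simp add: vec_eq_iff)
      then have "l = m mu j" using j by simp
      then show "l \<le> l0" unfolding m_def using mu lam_le0[of j] by simp
    qed
  qed
  have cont: "continuous_on K phi" for K
  proof -
    have lp: "max x (lam i) \<noteq> 0" for x i using lam_pos[of i] by linarith
    show ?thesis unfolding phi_def r_def m_def
      by (intro continuous_intros cont_Max) (auto simp: lp)
  qed
  have mono: "phi l0 \<le> phi mu" if "l0 \<le> mu" for mu
  proof -
    have ph: "phi x = Max (range (\<lambda>i. \<bar>1 / lam i * ((x - lam i) * (1 / x)) ^ (c+1)\<bar>))" if "l0 \<le> x" for x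
    proof -
      have li: "lam i \<le> x" for i using lam_le0[of i] that by linarith
      have "m x = (\<lambda>i. x)" using li unfolding m_def by (auto simp: fun_eq_iff)
      moreover have "r x = (\<lambda>i. x - lam i)" using li unfolding r_def by (auto simp: fun_eq_iff)
      ultimately show ?thesis unfolding phi_def using l0pos that by simp
    qed
    have gen: "\<bar>1 / L * a\<bar> \<le> \<bar>1 / L * b\<bar>" if "a \<le> b" "0 \<le> a" "0 < L" for a b L :: real
      using that by (simp add: abs_mult divide_right_mono)
    have "Max (range (\<lambda>i. \<bar>1 / lam i * ((l0 - lam i) * (1 / l0)) ^ (c+1)\<bar>))
        \<le> Max (range (\<lambda>i. \<bar>1 / lam i * ((mu - lam i) * (1 / mu)) ^ (c+1)\<bar>))"
    proof (rule Max_range_mono)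
      fix i
      have a0: "0 \<le> (l0 - lam i) * (1 / l0)" using lam_le0[of i] l0pos by simp
      have "(l0 - lam i) * (1 / l0) = 1 - lam i / l0" using l0pos by (simp add: field_simps)
      also have "\<dots> \<le> 1 - lam i / mu"
        using lam_pos[of i] l0pos that by (simp add: frac_le)
      also have "\<dots> = (mu - lam i) * (1 / mu)" using l0pos that by (simp add: field_simps)
      finally have "((l0 - lam i) * (1 / l0)) ^ (c+1) \<le> ((mu - lam i) * (1 / mu)) ^ (c+1)"
        using a0 by (intro power_mono) simp_all
      moreover have "0 \<le> ((l0 - lam i) * (1 / l0)) ^ (c+1)" using a0 by (rule zero_le_power)
      ultimately show "\<bar>1 / lam i * ((l0 - lam i) * (1 / l0)) ^ (c+1)\<bar>
          \<le> \<bar>1 / lam i * ((mu - lam i) * (1 / mu)) ^ (c+1)\<bar>"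
        using lam_pos[of i] gen by blast
    qed
    then show ?thesis using ph[of l0] ph[of mu] that by simp
  qed
  have P2: "\<exists>mu0 \<ge> l1. \<forall>mu \<ge> l1. phi mu0 \<le> phi mu"
  proof -
    obtain mu0 where mu0: "mu0 \<in> {l1..l0}" "\<forall>y\<in>{l1..l0}. phi mu0 \<le> phi y"
      using continuous_attains_inf[of "{l1..l0}" phi] cont l10 by auto
    have "phi mu0 \<le> phi mu" if "l1 \<le> mu" for mu
    proof (cases "mu \<le> l0")
      case True then show ?thesis using mu0 that by auto
    next
      case False
      then have "phi mu0 \<le> phi l0" using mu0 l10 by auto
      also have "\<dots> \<le> phi mu" using mono False by simp
      finally show ?thesis .
    qed
    then show ?thesis using mu0 by auto
  qed
  have P1: "\<bar>phi mu\<bar> \<le> Max (range (\<lambda>i. 1 / lam i)) * (1 + l0 / l1)" if mu: "l1 \<le> mu" for mu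
  proof -
    have mupos: "0 < mu" using mu l1pos by simp
    define X where "X = Max (range (\<lambda>i. \<bar>1 / lam i * (r mu i * (1 / m mu i)) ^ (c+1)\<bar>))"
    define Y where "Y = Max (range (\<lambda>i. \<bar>m mu i\<bar>))"
    define Z where "Z = Max (range (\<lambda>i. \<bar>1 / m mu i\<bar>))"
    have X0: "0 \<le> X" unfolding X_def by (rule order_trans[OF _ Max_range_ge]) simp
    have Y0: "0 \<le> Y" unfolding Y_def by (rule order_trans[OF _ Max_range_ge]) simp
    have Z0: "0 \<le> Z" unfolding Z_def by (rule order_trans[OF _ Max_range_ge]) simp
    have gen2: "\<bar>1 / L * a\<bar> \<le> 1 / L" if "a \<le> 1" "0 \<le> a" "0 < L" for a L :: real
      using that by (simp add: abs_mult divide_right_mono)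
    have X1: "X \<le> Max (range (\<lambda>i. 1 / lam i))" unfolding X_def
    proof (rule Max_range_mono)
      fix i
      have t0: "0 \<le> r mu i * (1 / m mu i)" using mpos[of mu i] unfolding r_def by simp
      have "r mu i \<le> m mu i" unfolding r_def m_def using lam_pos[of i] by (auto simp: max_def)
      then have t1: "r mu i * (1 / m mu i) \<le> 1" using mpos[of mu i] by (simp add: field_simps)
      have "(r mu i * (1 / m mu i)) ^ (c+1) \<le> 1" using t0 t1 by (rule power_le_one)
      moreover have "0 \<le> (r mu i * (1 / m mu i)) ^ (c+1)" using t0 by (rule zero_le_power)
      ultimately show "\<bar>1 / lam i * (r mu i * (1 / m mu i)) ^ (c+1)\<bar> \<le> 1 / lam i"
        using lam_pos[of i] gen2 by blast
    qed
    have Y1: "Y \<le> mu + l0"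
    proof -
      have "Y \<le> Max (range (\<lambda>i::'n. mu + l0))" unfolding Y_def
      proof (rule Max_range_mono)
        fix i
        show "\<bar>m mu i\<bar> \<le> mu + l0" using mpos[of mu i] lam_le0[of i] mupos l0pos
          unfolding m_def by (simp add: abs_le_iff max_def)
      qed
      then show ?thesis by simp
    qed
    have Z1: "Z \<le> 1 / mu"
    proof -
      have "Z \<le> Max (range (\<lambda>i::'n. 1 / mu))" unfolding Z_def
      proof (rule Max_range_mono)
        fix i
        have "mu \<le> m mu i" unfolding m_def by simp
        then show "\<bar>1 / m mu i\<bar> \<le> 1 / mu" using mpos[of mu i] mupos by (simp add: frac_le)
      qed
      then show ?thesis by simp
    qed
    have "Y * Z \<le> (mu + l0) * (1 / mu)" using Y1 Z1 Y0 Z0 by (intro mult_mono) simp_all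
    also have "\<dots> = 1 + l0 / mu" using mupos by (simp add: field_simps)
    also have "\<dots> \<le> 1 + l0 / l1" using mu l1pos l0pos by (simp add: frac_le)
    finally have YZ: "Y * Z \<le> 1 + l0 / l1" .
    have "phi mu = X * (Y * Z)" unfolding phi_def X_def Y_def Z_def ..
    moreover have "X * (Y * Z) \<le> Max (range (\<lambda>i. 1 / lam i)) * (1 + l0 / l1)"
      using X0 X1 YZ Y0 Z0 by (intro mult_mono) simp_all
    moreover have "0 \<le> X * (Y * Z)" using X0 Y0 Z0 by simp
    ultimately show ?thesis by simp
  qed
  show ?thesis
    unfolding A_def[symmetric] l0_def[symmetric] l1_def[symmetric] Obj_eq
    using P1 P2 P3 P4 P5 by blast
qed

end
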